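(* Let $\sigma\in\mathrm{NC}_n$ and $1\le i<j\le n$. Then $(i,j)\in\mathrm{Inv}_{\mathrm{NC}}(\sigma)$ if and only if $i$ is the smallest element of its cycle of $\sigma$ and either (1) $j$ belongs to the same cycle as $i$, or (2) $\sigma(j)<i<j$ and $j$ is minimal with respect to this property.
   Context: A set partition of $[n]$ is noncrossing if there are no distinct blocks $P,Q$ with $a,b\in P$, $c,d\in Q$, $a<c<b<d$; the associated permutation acts on each block $\{a_1<\dots<a_p\}$ by $a_j\mapsto a_{j-1}$ ($j\ge2$), $a_1\mapsto a_p$; $\mathrm{NC}_n$ is the set of these noncrossing permutations, whose cycles are the blocks. For $\sigma\in\mathrm{NC}_n$, $\mathrm{Inv}_{\mathrm{NC}}(\sigma)=\{(i,j)\in[n]^2: i<j,\ \sigma\circ(i\,j)\in\mathrm{NC}_n,\ \sigma(i)>\sigma(j)\}$, where $(i\,j)$ is the transposition. *)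

theory Defs
  imports "HOL-Combinatorics.Combinatorics" "HOL-Library.Disjoint_Sets"
begin

definition noncrossing :: "nat set set \<Rightarrow> bool" where
  "noncrossing Ps \<longleftrightarrow>
     (\<forall>P\<in>Ps. \<forall>Q\<in>Ps. P \<noteq> Q \<longrightarrow>
        \<not> (\<exists>a b c d. a \<in> P \<and> b \<in> P \<and> c \<in> Q \<and> d \<in> Q \<and> a < c \<and> c < b \<and> b < d))"

definition nc_partition :: "nat \<Rightarrow> nat set set \<Rightarrow> bool" where
  "nc_partition n Ps \<longleftrightarrow> partition_on {1..n} Ps \<and> noncrossing Ps"

definition assoc_perm :: "nat set set \<Rightarrow> nat \<Rightarrow> nat" where
  "assoc_perm Ps x =
     (if \<exists>B\<in>Ps. x \<in> B then
        (let B = (THE B. B \<in> Ps \<and> x \<in> B) in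
           if x = Min B then Max B else Max {y \<in> B. y < x})
      else x)"

definition NC :: "nat \<Rightarrow> (nat \<Rightarrow> nat) set" where
  "NC n = {assoc_perm Ps | Ps. nc_partition n Ps}"

text \<open>Noncrossing inversions; \<open>\<sigma> \<circ> transpose i j\<close> is \<open>\<sigma> \<circ> (i j)\<close>.\<close>
definition Inv_NC :: "nat \<Rightarrow> (nat \<Rightarrow> nat) \<Rightarrow> (nat \<times> nat) set" where
  "Inv_NC n \<sigma> = {(i, j). i \<in> {1..n} \<and> j \<in> {1..n} \<and> i < j \<and>
                        \<sigma> \<circ> transpose i j \<in> NC n \<and> \<sigma> i > \<sigma> j}"

end

theory Submission
  imports Defs
begin

definition cp :: "nat set \<Rightarrow> nat \<Rightarrow> nat" where
  "cp Q x = (if x = Min Q then Max Q else Max {y\<in>Q. y < x})"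

lemma ap_eq:
  assumes "partition_on A Ps" "Q \<in> Ps" "x \<in> Q"
  shows "assoc_perm Ps x = cp Q x"
proof -
  have "(THE B. B \<in> Ps \<and> x \<in> B) = Q"
  proof (rule the_equality)
    show "Q \<in> Ps \<and> x \<in> Q" using assms by blast
  next
    fix B assume "B \<in> Ps \<and> x \<in> B"
    then show "B = Q" using assms partition_onD2[OF assms(1)]
      by (meson disjnt_iff pairwise_def)
  qed
  then show ?thesis using assms unfolding assoc_perm_def cp_def by (auto simp: Let_def)
qed

lemma ap_out: "x \<notin> \<Union>Ps \<Longrightarrow> assoc_perm Ps x = x"
  unfolding assoc_perm_def by auto

lemma cp_in: "finite Q \<Longrightarrow> x \<in> Q \<Longrightarrow> cp Q x \<in> Q"
proof -
  assume f: "finite Q" and x: "x \<in> Q"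
  show ?thesis
  proof (cases "x = Min Q")
    case True then show ?thesis using f x by (auto simp: cp_def intro!: Max_in)
  next
    case False
    then have "Min Q < x" using f x by (metis Min_le order_le_neq_trans)
    then have "{y\<in>Q. y < x} \<noteq> {}" using f x Min_in by blast
    then have "Max {y\<in>Q. y < x} \<in> {y\<in>Q. y < x}" using f by (intro Max_in) auto
    then show ?thesis using False by (auto simp: cp_def)
  qed
qed

lemma cp_char:
  assumes f: "finite Q" and x: "x \<in> Q" and v: "v \<in> Q"
  shows "cp Q x = v \<longleftrightarrow> ((v < x \<and> (\<forall>y\<in>Q. y < x \<longrightarrow> y \<le> v)) \<or> (x \<le> v \<and> (\<forall>y\<in>Q. x \<le> y \<and> y \<le> v)))"
proof (cases "x = Min Q")
  case True
  then have "cp Q x = Max Q" by (simp add: cp_def)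
  moreover have "\<forall>y\<in>Q. x \<le> y" using True f by simp
  moreover have "\<forall>y\<in>Q. y \<le> Max Q" using f by simp
  moreover have "Max Q \<in> Q" using f x by (intro Max_in) auto
  ultimately show ?thesis using x v by (metis antisym not_le)
next
  case False
  then have m: "Min Q < x" using f x by (metis Min_le order_le_neq_trans)
  then have ne: "{y\<in>Q. y < x} \<noteq> {}" using f x Min_in by blast
  have c: "cp Q x = Max {y\<in>Q. y < x}" using False by (simp add: cp_def)
  have mi: "Max {y\<in>Q. y < x} \<in> {y\<in>Q. y < x}" using f ne by (intro Max_in) auto
  have mb: "\<forall>y\<in>Q. y < x \<longrightarrow> y \<le> Max {y\<in>Q. y < x}" using f by simp
  have "\<not> (\<forall>y\<in>Q. x \<le> y)" using m f x Min_in
    by (metis empty_iff not_le)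
  then show ?thesis using c mi mb v by (metis (no_types, lifting) antisym mem_Collect_eq not_le)
qed

lemma cp_lt:
  assumes "finite Q" "x \<in> Q" "y \<in> Q" "y < x"
  shows "cp Q x < x \<and> (\<forall>z\<in>Q. z < x \<longrightarrow> z \<le> cp Q x)"
  using cp_char[OF assms(1,2) cp_in[OF assms(1,2)]] assms by (meson not_le)

lemma cp_ge:
  assumes "finite Q" "x \<in> Q" "x \<le> cp Q x"
  shows "(\<forall>z\<in>Q. x \<le> z \<and> z \<le> cp Q x)"
  using cp_char[OF assms(1,2) cp_in[OF assms(1,2)]] assms by (meson not_le)

lemma cp_closure:
  assumes f: "finite Q" and y: "y \<in> Q" "y \<in> S" and cl: "\<forall>x\<in>Q\<inter>S. cp Q x \<in> S"
  shows "Q \<subseteq> S"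
proof -
  have ne: "Q \<inter> S \<noteq> {}" using y by blast
  define m where "m = Min (Q \<inter> S)"
  have m: "m \<in> Q \<inter> S" "\<forall>z\<in>Q\<inter>S. m \<le> z" using ne f Min_in[of "Q \<inter> S"] unfolding m_def by auto
  have mQ: "\<forall>z\<in>Q. m \<le> z"
  proof
    fix z assume z: "z \<in> Q"
    show "m \<le> z"
    proof (rule ccontr)
      assume "\<not> m \<le> z"
      then have "cp Q m < m" using cp_lt[OF f _ z] m by auto
      moreover have "cp Q m \<in> Q \<inter> S" using cl m cp_in[OF f] by auto
      ultimately show False using m(2) by (meson leD)
    qed
  qed
  show ?thesis
  proof (rule ccontr)
    assume "\<not> Q \<subseteq> S"
    then have ne2: "Q - S \<noteq> {}" by blast
    define M where "M = Max (Q - S)"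
    have M: "M \<in> Q - S" "\<forall>z\<in>Q-S. z \<le> M" using ne2 f Max_in[of "Q - S"] unfolding M_def by auto
    have "cp Q m \<in> S" using cl m by auto
    have "cp Q m \<in> Q" using cp_in[OF f] m by auto
    have "Min Q = m" using mQ m f by (intro Min_eqI) auto
    then have "cp Q m = Max Q" by (simp add: cp_def)
    moreover have "M \<le> Max Q" using M f by auto
    ultimately have "M < cp Q m" using M \<open>cp Q m \<in> S\<close> by (metis DiffD2 order_le_neq_trans)
    define s where "s = Min {z\<in>Q. M < z}"
    have sne: "{z\<in>Q. M < z} \<noteq> {}" using \<open>M < cp Q m\<close> \<open>cp Q m \<in> Q\<close> by blast
    have s: "s \<in> Q" "M < s" "\<forall>z\<in>Q. M < z \<longrightarrow> s \<le> z" using sne f unfolding s_def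
      using Min_in[of "{z\<in>Q. M < z}"] by auto
    have sS: "s \<in> S" using s M by (meson DiffI leD)
    have "\<forall>y\<in>Q. y < s \<longrightarrow> y \<le> M" using s by (meson leD leI)
    then have "cp Q s = M" using cp_char[OF f s(1), of M] M s by auto
    then show False using cl s sS M by auto
  qed
qed


lemma cp_eqI1: "finite Q \<Longrightarrow> x \<in> Q \<Longrightarrow> v \<in> Q \<Longrightarrow> v < x \<Longrightarrow> \<forall>y\<in>Q. y < x \<longrightarrow> y \<le> v \<Longrightarrow> cp Q x = v"
  using cp_char[of Q x v] by auto

lemma cp_eqI2: "finite Q \<Longrightarrow> x \<in> Q \<Longrightarrow> v \<in> Q \<Longrightarrow> \<forall>y\<in>Q. x \<le> y \<and> y \<le> v \<Longrightarrow> cp Q x = v"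
  using cp_char[of Q x v] by auto

lemma cp_cases:
  assumes "finite Q" "x \<in> Q"
  shows "(cp Q x < x \<and> (\<forall>y\<in>Q. y < x \<longrightarrow> y \<le> cp Q x)) \<or> (x \<le> cp Q x \<and> (\<forall>y\<in>Q. x \<le> y \<and> y \<le> cp Q x))"
  using cp_char[OF assms cp_in[OF assms]] by simp

lemma blk_U: "nc_partition n Ps \<Longrightarrow> \<Union>Ps = {1..n}"
  unfolding nc_partition_def partition_on_def by simp

lemma blk_sub: "nc_partition n Ps \<Longrightarrow> B \<in> Ps \<Longrightarrow> B \<subseteq> {1..n}"
proof -
  assume a: "nc_partition n Ps" "B \<in> Ps"
  have "B \<subseteq> \<Union>Ps" using a(2) by (rule Union_upper)
  then show ?thesis unfolding blk_U[OF a(1)] .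
qed

lemma blk_fin: "nc_partition n Ps \<Longrightarrow> B \<in> Ps \<Longrightarrow> finite B"
  by (rule finite_subset[OF blk_sub finite_atLeastAtMost])

lemma blk_ex: "nc_partition n Ps \<Longrightarrow> x \<in> {1..n} \<Longrightarrow> \<exists>B\<in>Ps. x \<in> B"
  using blk_U[of n Ps] by (metis UnionE)

lemma blk_disj: "nc_partition n Ps \<Longrightarrow> P \<in> Ps \<Longrightarrow> Q \<in> Ps \<Longrightarrow> P \<noteq> Q \<Longrightarrow> x \<in> P \<Longrightarrow> x \<notin> Q"
proof -
  assume a: "nc_partition n Ps" "P \<in> Ps" "Q \<in> Ps" "P \<noteq> Q" "x \<in> P"
  have "disjoint Ps" using a(1) unfolding nc_partition_def partition_on_def by simp
  then have "disjnt P Q" using a(2-4) by (simp add: pairwiseD)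
  then show "x \<notin> Q" using a(5) by (simp add: disjnt_iff)
qed

lemma ncD: "nc_partition n Ps \<Longrightarrow> P \<in> Ps \<Longrightarrow> Q \<in> Ps \<Longrightarrow> P \<noteq> Q \<Longrightarrow> a \<in> P \<Longrightarrow> b \<in> P \<Longrightarrow>
   c \<in> Q \<Longrightarrow> d \<in> Q \<Longrightarrow> a < c \<Longrightarrow> c < b \<Longrightarrow> b < d \<Longrightarrow> False"
proof -
  assume a: "nc_partition n Ps" "P \<in> Ps" "Q \<in> Ps" "P \<noteq> Q" "a \<in> P" "b \<in> P"
   "c \<in> Q" "d \<in> Q" "a < c" "c < b" "b < d"
  have nc: "noncrossing Ps" using a(1) unfolding nc_partition_def by simp
  have "\<not> (\<exists>a b c d. a \<in> P \<and> b \<in> P \<and> c \<in> Q \<and> d \<in> Q \<and> a < c \<and> c < b \<and> b < d)"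
    by (rule nc[unfolded noncrossing_def, rule_format, OF a(2,3,4)])
  then show False using a(5-11) by blast
qed

lemma ap_blk: "nc_partition n Ps \<Longrightarrow> B \<in> Ps \<Longrightarrow> x \<in> B \<Longrightarrow> assoc_perm Ps x = cp B x"
  unfolding nc_partition_def using ap_eq by blast

lemma ap_outside: "nc_partition n Ps \<Longrightarrow> x \<notin> {1..n} \<Longrightarrow> assoc_perm Ps x = x"
  using blk_U[of n Ps] ap_out[of x Ps] by simp

lemma orbit_eq:
  assumes P: "nc_partition n Ps" and B: "B \<in> Ps" "x \<in> B"
  shows "orbit (assoc_perm Ps) x = B"
proof
  have f: "finite B" using blk_fin P B by blast
  show "orbit (assoc_perm Ps) x \<subseteq> B"
  proof
    fix y assume "y \<in> orbit (assoc_perm Ps) x"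
    then show "y \<in> B"
    proof induct
      case base then show ?case using ap_blk[OF P B] cp_in[OF f B(2)] by simp
    next
      case (step y) then show ?case using ap_blk[OF P B(1) step(2)] cp_in[OF f step(2)] by simp
    qed
  qed
  show "B \<subseteq> orbit (assoc_perm Ps) x"
  proof (rule cp_closure[OF f])
    show "cp B x \<in> B" using cp_in[OF f B(2)] .
    show "cp B x \<in> orbit (assoc_perm Ps) x" using ap_blk[OF P B] orbit.base by metis
    show "\<forall>y\<in>B \<inter> orbit (assoc_perm Ps) x. cp B y \<in> orbit (assoc_perm Ps) x"
    proof
      fix y assume y: "y \<in> B \<inter> orbit (assoc_perm Ps) x"
      then have "assoc_perm Ps y \<in> orbit (assoc_perm Ps) x" by (auto intro: orbit.step)
      then show "cp B y \<in> orbit (assoc_perm Ps) x" using ap_blk[OF P B(1)] y by auto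
    qed
  qed
qed

lemma NC_I:
  assumes "nc_partition n Qs" "\<forall>Q\<in>Qs. \<forall>x\<in>Q. t x = cp Q x" "\<forall>x. x \<notin> {1..n} \<longrightarrow> t x = x"
  shows "t \<in> NC n"
proof -
  have "t = assoc_perm Qs"
  proof
    fix x show "t x = assoc_perm Qs x"
    proof (cases "x \<in> {1..n}")
      case True
      then obtain Q where "Q \<in> Qs" "x \<in> Q" using blk_ex[OF assms(1)] by blast
      then show ?thesis using assms(2) ap_blk[OF assms(1)] by auto
    next
      case False then show ?thesis using assms(3) ap_outside[OF assms(1)] by auto
    qed
  qed
  then show ?thesis using assms(1) unfolding NC_def by blast
qed


definition cross :: "nat set \<Rightarrow> nat set \<Rightarrow> bool" where
  "cross P Q \<longleftrightarrow> (\<exists>a b c d. a \<in> P \<and> b \<in> P \<and> c \<in> Q \<and> d \<in> Q \<and> a < c \<and> c < b \<and> b < d)"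

lemma noncrossing_iff: "noncrossing Ps \<longleftrightarrow> (\<forall>P\<in>Ps. \<forall>Q\<in>Ps. P \<noteq> Q \<longrightarrow> \<not> cross P Q)"
  unfolding noncrossing_def cross_def by simp

lemma crossI: "a \<in> P \<Longrightarrow> b \<in> P \<Longrightarrow> c \<in> Q \<Longrightarrow> d \<in> Q \<Longrightarrow> a < c \<Longrightarrow> c < b \<Longrightarrow> b < d \<Longrightarrow> cross P Q"
  unfolding cross_def by blast

lemma cross_mono: "cross P Q \<Longrightarrow> P \<subseteq> P' \<Longrightarrow> Q \<subseteq> Q' \<Longrightarrow> cross P' Q'"
  unfolding cross_def by blast

lemma ncD': "nc_partition n Ps \<Longrightarrow> P \<in> Ps \<Longrightarrow> Q \<in> Ps \<Longrightarrow> P \<noteq> Q \<Longrightarrow> \<not> cross P Q"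
  unfolding nc_partition_def noncrossing_iff by simp

lemma repl_partition:
  assumes P: "nc_partition n Ps" and R: "Rs \<subseteq> Ps" and U: "\<Union>Ns = \<Union>Rs"
    and D: "\<forall>p\<in>Ns. \<forall>q\<in>Ns. p \<noteq> q \<longrightarrow> disjnt p q" and E: "{} \<notin> Ns"
  shows "partition_on {1..n} (Ns \<union> (Ps - Rs))"
proof (rule partition_onI)
  have "\<Union>(Ns \<union> (Ps - Rs)) = \<Union>Rs \<union> \<Union>(Ps - Rs)" using U by simp
  also have "\<dots> = \<Union>Ps" using R by blast
  finally show "\<Union>(Ns \<union> (Ps - Rs)) = {1..n}" using blk_U[OF P] by simp
next
  have E2: "{} \<notin> Ps" using P unfolding nc_partition_def partition_on_def by simp
  then show "{} \<notin> Ns \<union> (Ps - Rs)" using E by simp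
next
  fix p q assume p: "p \<in> Ns \<union> (Ps - Rs)" and q: "q \<in> Ns \<union> (Ps - Rs)" and pq: "p \<noteq> q"
  have key: "disjnt a b" if a: "a \<in> Ns" and b: "b \<in> Ps - Rs" for a b
    unfolding disjnt_def
  proof (rule equals0I)
    fix x assume x: "x \<in> a \<inter> b"
    then have "x \<in> \<Union>Rs" using a U by blast
    then obtain r where r: "r \<in> Rs" "x \<in> r" by blast
    have "r \<noteq> b" using r b by blast
    then show False using blk_disj[OF P _ _ _ r(2), of b] r R b x by blast
  qed
  show "disjnt p q"
  proof (cases "p \<in> Ns")
    case True
    show ?thesis
    proof (cases "q \<in> Ns")
      case True then show ?thesis using D \<open>p \<in> Ns\<close> pq by blast
    next
      case False then show ?thesis using key[OF \<open>p \<in> Ns\<close>] q by blast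
    qed
  next
    case False
    then have p2: "p \<in> Ps - Rs" using p by blast
    show ?thesis
    proof (cases "q \<in> Ns")
      case True then show ?thesis using key[OF True p2] disjnt_sym by blast
    next
      case False
      then have "q \<in> Ps" using q by blast
      then show ?thesis using p2 pq P unfolding nc_partition_def partition_on_def
        by (meson DiffD1 pairwiseD)
    qed
  qed
qed

lemma split_NC:
  assumes P: "nc_partition n Ps" and B: "B \<in> Ps" "i \<in> B" "j \<in> B" and im: "\<forall>y\<in>B. i \<le> y"
    and ij: "i < j"
  shows "assoc_perm Ps \<circ> transpose i j \<in> NC n"
proof -
  define \<sigma> where "\<sigma> = assoc_perm Ps"
  define B1 where "B1 = {y\<in>B. y < j}"
  define B2 where "B2 = {y\<in>B. j \<le> y}"
  define Qs where "Qs = {B1, B2} \<union> (Ps - {B})"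
  have f: "finite B" using blk_fin[OF P B(1)] .
  have f1: "finite B1" "finite B2" using f unfolding B1_def B2_def by auto
  have iB1: "i \<in> B1" using B ij unfolding B1_def by simp
  have jB2: "j \<in> B2" using B unfolding B2_def by simp
  have UB: "\<Union>{B1, B2} = \<Union>{B}" unfolding B1_def B2_def by auto
  have part: "partition_on {1..n} Qs" unfolding Qs_def
  proof (rule repl_partition[OF P _ UB])
    show "{B} \<subseteq> Ps" using B by simp
    show "\<forall>p\<in>{B1, B2}. \<forall>q\<in>{B1, B2}. p \<noteq> q \<longrightarrow> disjnt p q"
      unfolding B1_def B2_def disjnt_def by auto
    show "{} \<notin> {B1, B2}" using iB1 jB2 by auto
  qed
  have sub: "B1 \<subseteq> B" "B2 \<subseteq> B" unfolding B1_def B2_def by auto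
  have nc: "noncrossing Qs" unfolding noncrossing_iff
  proof (intro ballI impI)
    fix p q assume p: "p \<in> Qs" and q: "q \<in> Qs" and pq: "p \<noteq> q"
    have c12: "\<not> cross B1 B2" "\<not> cross B2 B1" unfolding cross_def B1_def B2_def by auto
    show "\<not> cross p q"
    proof (cases "p \<in> Ps - {B}")
      case True
      show ?thesis
      proof (cases "q \<in> Ps - {B}")
        case True then show ?thesis using \<open>p \<in> Ps - {B}\<close> ncD'[OF P] pq by blast
      next
        case False
        then have "q \<subseteq> B" using q sub unfolding Qs_def by auto
        moreover have "\<not> cross p B" using ncD'[OF P] \<open>p \<in> Ps - {B}\<close> B(1) by blast
        ultimately show ?thesis using cross_mono by blast
      qed
    next
      case False
      then have pB: "p = B1 \<or> p = B2" using p unfolding Qs_def by auto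
      show ?thesis
      proof (cases "q \<in> Ps - {B}")
        case True
        have "\<not> cross B q" using ncD'[OF P] True B(1) by blast
        then show ?thesis using cross_mono pB sub by blast
      next
        case False
        then have "q = B1 \<or> q = B2" using q unfolding Qs_def by auto
        then show ?thesis using pB pq c12 by auto
      qed
    qed
  qed
  have ncp: "nc_partition n Qs" using part nc unfolding nc_partition_def by simp
  have ij': "i \<noteq> j" using ij by simp
  show ?thesis
  proof (rule NC_I[OF ncp])
    show "\<forall>x. x \<notin> {1..n} \<longrightarrow> (assoc_perm Ps \<circ> transpose i j) x = x"
    proof (intro allI impI)
      fix x assume x: "x \<notin> {1..n}"
      have "x \<noteq> i" "x \<noteq> j" using x B blk_sub[OF P B(1)] by auto
      then show "(assoc_perm Ps \<circ> transpose i j) x = x" using ap_outside[OF P x] by simp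
    qed
    show "\<forall>Q\<in>Qs. \<forall>x\<in>Q. (assoc_perm Ps \<circ> transpose i j) x = cp Q x"
    proof (intro ballI)
      fix Q x assume Q: "Q \<in> Qs" and x: "x \<in> Q"
      show "(assoc_perm Ps \<circ> transpose i j) x = cp Q x"
      proof (cases "Q \<in> Ps - {B}")
        case True
        then have "x \<notin> B" using blk_disj[OF P _ B(1) _ x] by blast
        then have "x \<noteq> i" "x \<noteq> j" using B by auto
        then show ?thesis using ap_blk[OF P _ x] True by simp
      next
        case False
        then have QB: "Q = B1 \<or> Q = B2" using Q unfolding Qs_def by auto
        then have xB: "x \<in> B" using x sub by auto
        show ?thesis
        proof (cases "Q = B1")
          case True
          then have xj: "x < j" using x unfolding B1_def by simp
          show ?thesis
          proof (cases "x = i")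
            case True
            have l: "cp B j < j \<and> (\<forall>z\<in>B. z < j \<longrightarrow> z \<le> cp B j)" using cp_lt[OF f B(3) B(2) ij] .
            have v: "cp B j \<in> B" using cp_in[OF f B(3)] .
            have "cp B1 i = cp B j"
              by (rule cp_eqI2[OF f1(1) iB1]) (use l v im in \<open>auto simp: B1_def\<close>)
            then show ?thesis using True \<open>Q = B1\<close> ap_blk[OF P B(1) B(3)] by simp
          next
            case False
            have xi: "i < x" using False im xB by (simp add: order_le_neq_trans)
            have l: "cp B x < x \<and> (\<forall>z\<in>B. z < x \<longrightarrow> z \<le> cp B x)" using cp_lt[OF f xB B(2) xi] .
            have v: "cp B x \<in> B" using cp_in[OF f xB] .
            have "cp B1 x = cp B x"
              by (rule cp_eqI1[OF f1(1) x[unfolded True]]) (use l v xj in \<open>auto simp: B1_def\<close>)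
            then show ?thesis using False xj \<open>Q = B1\<close> ap_blk[OF P B(1) xB] by simp
          qed
        next
          case False
          then have QB2: "Q = B2" using QB by simp
          then have xj: "j \<le> x" using x unfolding B2_def by simp
          show ?thesis
          proof (cases "x = j")
            case True
            have v: "cp B i \<in> B" using cp_in[OF f B(2)] .
            have l: "\<forall>y\<in>B. i \<le> y \<and> y \<le> cp B i" using cp_cases[OF f B(2)] v im by (meson leD)
            have "cp B2 j = cp B i"
              by (rule cp_eqI2[OF f1(2) jB2]) (use l v B(3) in \<open>auto simp: B2_def\<close>)
            then show ?thesis using True QB2 ap_blk[OF P B(1) B(2)] by simp
          next
            case False
            have xj2: "j < x" using False xj by simp
            have l: "cp B x < x \<and> (\<forall>z\<in>B. z < x \<longrightarrow> z \<le> cp B x)" using cp_lt[OF f xB B(3) xj2] .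
            have v: "cp B x \<in> B" using cp_in[OF f xB] .
            have "cp B2 x = cp B x"
              by (rule cp_eqI1[OF f1(2) x[unfolded QB2]]) (use l v xj2 B(3) in \<open>auto simp: B2_def\<close>)
            then show ?thesis using False xj2 ij QB2 ap_blk[OF P B(1) xB] by simp
          qed
        qed
      qed
    qed
  qed
qed


lemma merge_NC:
  assumes P: "nc_partition n Ps" and Bi: "Bi \<in> Ps" "i \<in> Bi" and Bj: "Bj \<in> Ps" "j \<in> Bj"
    and neq: "Bi \<noteq> Bj" and im: "\<forall>y\<in>Bi. i \<le> y" and ij: "i < j"
    and sj: "assoc_perm Ps j < i"
    and mn: "\<forall>k\<in>{1..n}. assoc_perm Ps k < i \<and> i < k \<longrightarrow> j \<le> k"
  shows "assoc_perm Ps \<circ> transpose i j \<in> NC n"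
proof -
  define s where "s = cp Bj j"
  have fi: "finite Bi" using blk_fin[OF P Bi(1)] .
  have fj: "finite Bj" using blk_fin[OF P Bj(1)] .
  have ss: "assoc_perm Ps j = s" using ap_blk[OF P Bj] s_def by simp
  have si: "s < i" using sj ss by simp
  have sBj: "s \<in> Bj" using cp_in[OF fj Bj(2)] s_def by simp
  have G1: "\<forall>y\<in>Bj. y < j \<longrightarrow> y \<le> s" using cp_cases[OF fj Bj(2)] si ij s_def by auto
  have dij: "\<And>x. x \<in> Bi \<Longrightarrow> x \<notin> Bj" using blk_disj[OF P Bi(1) Bj(1) neq] .
  have F1: "\<forall>x\<in>Bi. x < j"
  proof
    fix x assume x: "x \<in> Bi"
    show "x < j"
    proof (rule ccontr)
      assume "\<not> x < j"
      then have "j < x" using dij[OF x] Bj(2) by (metis antisym_conv3)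
      then show False using ncD[OF P Bj(1) Bi(1) neq[symmetric] sBj Bj(2) Bi(2) x] si ij by simp
    qed
  qed
  have F2: "\<forall>y\<in>Bj. y \<le> s \<or> j \<le> y" using G1 by (meson not_le)
  have P2: "\<forall>d\<in>D. s < d \<and> d < j" if D: "D \<in> Ps" "D \<noteq> Bj" "x \<in> D" "s < x" "x < j" for D x
  proof
    fix d assume d: "d \<in> D"
    have "d \<noteq> s" "d \<noteq> j" using blk_disj[OF P Bj(1) D(1) D(2)[symmetric]] sBj Bj(2) d by auto
    moreover have "\<not> d < s" using ncD[OF P D(1) Bj(1) D(2) d D(3) sBj Bj(2)] D by auto
    moreover have "\<not> j < d" using ncD[OF P Bj(1) D(1) D(2)[symmetric] sBj Bj(2) D(3) d] D by auto
    ultimately show "s < d \<and> d < j" by simp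
  qed
  have P3: False if D: "D \<in> Ps" "x \<in> D" "y \<in> D" "x < i" "i < y" "y < j" for D x y
  proof -
    have fD: "finite D" using blk_fin[OF P D(1)] .
    define k where "k = Min {z\<in>D. i < z}"
    have ne: "{z\<in>D. i < z} \<noteq> {}" using D by blast
    have k: "k \<in> D" "i < k" "\<forall>z\<in>D. i < z \<longrightarrow> k \<le> z"
      using Min_in[of "{z\<in>D. i < z}"] ne fD unfolding k_def by auto
    have ky: "k \<le> y" using k D by simp
    have xk: "x < k" using D k by simp
    have l: "cp D k < k \<and> (\<forall>z\<in>D. z < k \<longrightarrow> z \<le> cp D k)" using cp_lt[OF fD k(1) D(2) xk] .
    have v: "cp D k \<in> D" using cp_in[OF fD k(1)] .
    have "D \<noteq> Bi" using D im by force
    then have iD: "i \<notin> D" using blk_disj[OF P Bi(1) D(1)] Bi(2) by metis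
    have "cp D k < i"
    proof (rule ccontr)
      assume "\<not> cp D k < i"
      then have "i < cp D k" using iD v by (metis antisym_conv3)
      then show False using k(3) v l by fastforce
    qed
    moreover have "k \<in> {1..n}" using blk_sub[OF P D(1)] k(1) by blast
    ultimately have "j \<le> k" using mn k(2) ap_blk[OF P D(1) k(1)] by simp
    then show False using ky D by simp
  qed
  define C where "C = Bi \<union> Bj"
  define Qs where "Qs = {C} \<union> (Ps - {Bi, Bj})"
  have fC: "finite C" using fi fj C_def by simp
  have part: "partition_on {1..n} Qs" unfolding Qs_def
  proof (rule repl_partition[OF P])
    show "{Bi, Bj} \<subseteq> Ps" using Bi Bj by simp
    show "\<Union>{C} = \<Union>{Bi, Bj}" unfolding C_def by simp
    show "\<forall>p\<in>{C}. \<forall>q\<in>{C}. p \<noteq> q \<longrightarrow> disjnt p q" by simp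
    show "{} \<notin> {C}" using Bi unfolding C_def by auto
  qed
  have nci: "\<not> cross Bi D" "\<not> cross D Bi" if D: "D \<in> Ps" "D \<noteq> Bi" for D
    using ncD'[OF P Bi(1) D(1) D(2)[symmetric]] ncD'[OF P D(1) Bi(1) D(2)] by auto
  have ncj: "\<not> cross Bj D" "\<not> cross D Bj" if D: "D \<in> Ps" "D \<noteq> Bj" for D
    using ncD'[OF P Bj(1) D(1) D(2)[symmetric]] ncD'[OF P D(1) Bj(1) D(2)] by auto
  have crossC1: False if D: "D \<in> Ps" "D \<noteq> Bi" "D \<noteq> Bj" and abcd: "a \<in> C" "b \<in> C" "c \<in> D" "d \<in> D"
     "a < c" "c < b" "b < d" for D a b c d
  proof -
    have nci: "\<not> cross Bi D" "\<not> cross D Bi" using nci[OF D(1,2)] by auto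
    have ncj: "\<not> cross Bj D" "\<not> cross D Bj" using ncj[OF D(1,3)] by auto
    have nn: "c \<notin> Bi" "c \<notin> Bj" "d \<notin> Bj" "d \<notin> Bi"
      using blk_disj[OF P D(1) Bi(1) D(2)] blk_disj[OF P D(1) Bj(1) D(3)] abcd(3,4) by auto
    have cne: "c \<noteq> s" "c \<noteq> j" "c \<noteq> i" "d \<noteq> j" "d \<noteq> s" using nn sBj Bj(2) Bi(2) by auto
    consider "a \<in> Bj" "b \<in> Bj" | "a \<in> Bi" "b \<in> Bi" | "a \<in> Bj" "b \<in> Bi" | "a \<in> Bi" "b \<in> Bj"
      using abcd(1,2) unfolding C_def by blast
    then show False
    proof cases
      case 1 then show False using ncj crossI[OF 1(1,2) abcd(3-7)] by simp
    next
      case 2 then show False using nci crossI[OF 2(1,2) abcd(3-7)] by simp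
    next
      case 3
      have bj: "b < j" "i \<le> b" using 3 F1 im by auto
      show False
      proof (cases "s < c")
        case True
        have "\<forall>z\<in>D. s < z \<and> z < j" using P2[OF D(1) D(3) abcd(3) True] abcd(6) bj by simp
        then have dj: "d < j" using abcd(4) by simp
        show False
        proof (cases "c < i")
          case True
          have "i < d" using bj abcd(7) by simp
          then show False using P3[OF D(1) abcd(3) abcd(4) True _ dj] by simp
        next
          case False
          then have "i < c" using cne by simp
          then show False using nci crossI[OF Bi(2) 3(2) abcd(3,4) _ abcd(6,7)] by simp
        qed
      next
        case False
        then have cs: "c < s" using cne by simp
        show False
        proof (cases "j < d")
          case True
          then show False using ncj crossI[OF 3(1) Bj(2) abcd(3,4) abcd(5)] bj abcd(6) by simp
        next
          case False
          then have "s < d" "d < j" using cne abcd(6,7) bj si by auto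
          then have "\<forall>z\<in>D. s < z \<and> z < j" using P2[OF D(1) D(3) abcd(4)] by simp
          then show False using cs abcd(3) by auto
        qed
      qed
    next
      case 4
      have ai: "i \<le> a" "a < j" using 4 F1 im by auto
      have "s < b" using ai si abcd(5,6) by simp
      then have bj: "j \<le> b" using F2 4(2) by fastforce
      show False
      proof (cases "c < j")
        case True
        have "s < c" using ai si abcd(5) by simp
        then have "\<forall>z\<in>D. s < z \<and> z < j" using P2[OF D(1) D(3) abcd(3) _ True] by simp
        then show False using abcd(4,7) bj by fastforce
      next
        case False
        then have "j < c" using cne by simp
        have "s < c" using ai si abcd(5) by simp
        then show False using ncj crossI[OF sBj 4(2) abcd(3,4) _ abcd(6,7)] by simp
      qed
    qed
  qed
  have crossC2: False if D: "D \<in> Ps" "D \<noteq> Bi" "D \<noteq> Bj" and abcd: "a \<in> D" "b \<in> D" "c \<in> C" "d \<in> C"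
     "a < c" "c < b" "b < d" for D a b c d
  proof -
    have nci: "\<not> cross Bi D" "\<not> cross D Bi" using nci[OF D(1,2)] by auto
    have ncj: "\<not> cross Bj D" "\<not> cross D Bj" using ncj[OF D(1,3)] by auto
    have nn: "a \<notin> Bi" "a \<notin> Bj" "b \<notin> Bj" "b \<notin> Bi"
      using blk_disj[OF P D(1) Bi(1) D(2)] blk_disj[OF P D(1) Bj(1) D(3)] abcd(1,2) by auto
    have bne: "b \<noteq> s" "b \<noteq> j" "a \<noteq> i" "a \<noteq> j" "b \<noteq> i" using nn sBj Bj(2) Bi(2) by auto
    consider "c \<in> Bj" "d \<in> Bj" | "c \<in> Bi" "d \<in> Bi" | "c \<in> Bj" "d \<in> Bi" | "c \<in> Bi" "d \<in> Bj"
      using abcd(3,4) unfolding C_def by blast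
    then show False
    proof cases
      case 1 then show False using ncj crossI[OF abcd(1,2) 1(1,2) abcd(5-7)] by simp
    next
      case 2 then show False using nci crossI[OF abcd(1,2) 2(1,2) abcd(5-7)] by simp
    next
      case 3
      have dj: "d < j" using 3 F1 by auto
      have cs: "c \<le> s" using F2 3(1) abcd(6,7) dj by fastforce
      show False
      proof (cases "s < b")
        case True
        have "b < j" using abcd(7) dj by simp
        then have "\<forall>z\<in>D. s < z \<and> z < j" using P2[OF D(1) D(3) abcd(2) True] by simp
        then show False using abcd(1,5) cs by fastforce
      next
        case False
        then have "b < s" using bne by simp
        then show False using ncj crossI[OF abcd(1,2) 3(1) sBj abcd(5,6)] by simp
      qed
    next
      case 4
      have ci: "i \<le> c" "c < j" using 4 F1 im by auto
      show False
      proof (cases "b < j")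
        case True
        have "s < b" using ci si abcd(6) by simp
        then have "\<forall>z\<in>D. s < z \<and> z < j" using P2[OF D(1) D(3) abcd(2) _ True] by simp
        then have as: "s < a" using abcd(1) by simp
        show False
        proof (cases "a < i")
          case True
          have "i < b" using ci abcd(6) by simp
          then show False using P3[OF D(1) abcd(1) abcd(2) True _ \<open>b < j\<close>] by simp
        next
          case False
          then have "i < a" using bne by simp
          then show False using nci crossI[OF Bi(2) 4(1) abcd(1,2) _ abcd(5,6)] by simp
        qed
      next
        case False
        then have "j < b" using bne by simp
        have "a < j" using abcd(5) ci by simp
        then show False using ncj crossI[OF abcd(1,2) Bj(2) 4(2) _ \<open>j < b\<close> abcd(7)] by simp
      qed
    qed
  qed
  have nc: "noncrossing Qs" unfolding noncrossing_iff
  proof (intro ballI impI)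
    fix p q assume p: "p \<in> Qs" and q: "q \<in> Qs" and pq: "p \<noteq> q"
    show "\<not> cross p q"
    proof (cases "p = C")
      case True
      then have "q \<in> Ps" "q \<noteq> Bi" "q \<noteq> Bj" using q pq unfolding Qs_def by auto
      then show ?thesis using crossC1 True unfolding cross_def by metis
    next
      case False
      then have p2: "p \<in> Ps" "p \<noteq> Bi" "p \<noteq> Bj" using p unfolding Qs_def by auto
      show ?thesis
      proof (cases "q = C")
        case True
        then show ?thesis using crossC2 p2 unfolding cross_def by metis
      next
        case False
        then have "q \<in> Ps" using q unfolding Qs_def by auto
        then show ?thesis using ncD'[OF P] p2 pq by blast
      qed
    qed
  qed
  have ncp: "nc_partition n Qs" using part nc unfolding nc_partition_def by simp
  show ?thesis
  proof (rule NC_I[OF ncp])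
    show "\<forall>x. x \<notin> {1..n} \<longrightarrow> (assoc_perm Ps \<circ> transpose i j) x = x"
    proof (intro allI impI)
      fix x assume x: "x \<notin> {1..n}"
      have "x \<noteq> i" "x \<noteq> j" using x Bi Bj blk_sub[OF P Bi(1)] blk_sub[OF P Bj(1)] by auto
      then show "(assoc_perm Ps \<circ> transpose i j) x = x" using ap_outside[OF P x] by simp
    qed
    show "\<forall>Q\<in>Qs. \<forall>x\<in>Q. (assoc_perm Ps \<circ> transpose i j) x = cp Q x"
    proof (intro ballI)
      fix Q x assume Q: "Q \<in> Qs" and x: "x \<in> Q"
      show "(assoc_perm Ps \<circ> transpose i j) x = cp Q x"
      proof (cases "Q = C")
        case False
        then have Q2: "Q \<in> Ps" "Q \<noteq> Bi" "Q \<noteq> Bj" using Q unfolding Qs_def by auto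
        have "x \<noteq> i" using blk_disj[OF P Q2(1) Bi(1) Q2(2) x] Bi(2) by metis
        moreover have "x \<noteq> j" using blk_disj[OF P Q2(1) Bj(1) Q2(3) x] Bj(2) by metis
        ultimately show ?thesis using ap_blk[OF P Q2(1) x] by simp
      next
        case True
        then have xC: "x \<in> C" using x by simp
        have iC: "i \<in> C" "j \<in> C" "s \<in> C" using Bi Bj sBj C_def by auto
        consider "x = i" | "x \<in> Bi" "x \<noteq> i" | "x = j" | "x \<in> Bj" "x \<noteq> j"
          using xC C_def by blast
        then show ?thesis
        proof cases
          case 1
          have "cp C i = s"
          proof (rule cp_eqI1[OF fC iC(1) iC(3) si])
            show "\<forall>y\<in>C. y < i \<longrightarrow> y \<le> s" using im G1 ij C_def by fastforce
          qed
          then show ?thesis using 1 True ss by simp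
        next
          case 2
          have xi: "i < x" using 2 im by (simp add: order_le_neq_trans)
          have l: "cp Bi x < x \<and> (\<forall>z\<in>Bi. z < x \<longrightarrow> z \<le> cp Bi x)" using cp_lt[OF fi 2(1) Bi(2) xi] .
          have v: "cp Bi x \<in> Bi" using cp_in[OF fi 2(1)] .
          have iv: "i \<le> cp Bi x" using l Bi(2) xi by simp
          have xj: "x < j" using F1 2 by simp
          have "cp C x = cp Bi x"
          proof (rule cp_eqI1[OF fC xC])
            show "cp Bi x \<in> C" using v C_def by simp
            show "cp Bi x < x" using l by simp
            show "\<forall>y\<in>C. y < x \<longrightarrow> y \<le> cp Bi x"
            proof (intro ballI impI)
              fix y assume y: "y \<in> C" "y < x"
              show "y \<le> cp Bi x"
              proof (cases "y \<in> Bi")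
                case True then show ?thesis using l y by simp
              next
                case False then have "y \<in> Bj" using y C_def by simp
                then have "y \<le> s" using G1 y xj by simp
                then show ?thesis using si iv by simp
              qed
            qed
          qed
          moreover have "x \<noteq> j" using xj by simp
          ultimately show ?thesis using 2 True ap_blk[OF P Bi(1) 2(1)] by simp
        next
          case 3
          define v where "v = cp Bi i"
          have v: "v \<in> Bi" using cp_in[OF fi Bi(2)] v_def by simp
          have l: "\<forall>y\<in>Bi. y \<le> v" using cp_cases[OF fi Bi(2)] v im v_def by (meson leD)
          have iv: "i \<le> v" using l Bi(2) by simp
          have "cp C j = v"
          proof (rule cp_eqI1[OF fC iC(2)])
            show "v \<in> C" using v C_def by simp
            show "v < j" using F1 v by simp
            show "\<forall>y\<in>C. y < j \<longrightarrow> y \<le> v"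
            proof (intro ballI impI)
              fix y assume y: "y \<in> C" "y < j"
              show "y \<le> v"
              proof (cases "y \<in> Bi")
                case True then show ?thesis using l by simp
              next
                case False then have "y \<in> Bj" using y C_def by simp
                then have "y \<le> s" using G1 y by simp
                then show ?thesis using si iv by simp
              qed
            qed
          qed
          then show ?thesis using 3 True ap_blk[OF P Bi] v_def ij by simp
        next
          case 4
          define w where "w = cp Bj x"
          have w: "w \<in> Bj" using cp_in[OF fj 4(1)] w_def by simp
          have xi: "x \<noteq> i" using 4 dij Bi(2) by metis
          have "cp C x = w"
            using cp_cases[OF fj 4(1), folded w_def]
          proof
            assume A: "w < x \<and> (\<forall>y\<in>Bj. y < x \<longrightarrow> y \<le> w)"
            show "cp C x = w"
            proof (rule cp_eqI1[OF fC xC])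
              show "w \<in> C" using w C_def by simp
              show "w < x" using A by simp
              show "\<forall>y\<in>C. y < x \<longrightarrow> y \<le> w"
              proof (intro ballI impI)
                fix y assume y: "y \<in> C" "y < x"
                show "y \<le> w"
                proof (cases "y \<in> Bj")
                  case True then show ?thesis using A y by simp
                next
                  case False
                  then have yBi: "y \<in> Bi" using y C_def by simp
                  show ?thesis
                  proof (cases "x < j")
                    case True
                    then have "x \<le> s" using G1 4 by simp
                    then show ?thesis using yBi im y si by fastforce
                  next
                    case False
                    then have "j < x" using 4 by simp
                    then have "j \<le> w" using A Bj(2) by simp
                    then show ?thesis using F1 yBi by fastforce
                  qed
                qed
              qed
            qed
          next
            assume A: "x \<le> w \<and> (\<forall>y\<in>Bj. x \<le> y \<and> y \<le> w)"
            show "cp C x = w"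
            proof (rule cp_eqI2[OF fC xC])
              show "w \<in> C" using w C_def by simp
              have xs: "x \<le> s" using A sBj by simp
              have jw: "j \<le> w" using A Bj(2) by simp
              show "\<forall>y\<in>C. x \<le> y \<and> y \<le> w"
              proof
                fix y assume y: "y \<in> C"
                show "x \<le> y \<and> y \<le> w"
                proof (cases "y \<in> Bj")
                  case True then show ?thesis using A by simp
                next
                  case False
                  then have yBi: "y \<in> Bi" using y C_def by simp
                  then show ?thesis using im xs si jw F1 by fastforce
                qed
              qed
            qed
          qed
          then show ?thesis using 4 xi True ap_blk[OF P Bj(1) 4(1)] w_def by simp
        qed
      qed
    qed
  qed
qed


lemma fwd_same:
  assumes P: "nc_partition n Ps" and B: "B \<in> Ps" "i \<in> B" "j \<in> B" and ij: "i < j"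
    and gt: "assoc_perm Ps j < assoc_perm Ps i"
  shows "\<forall>y\<in>B. i \<le> y"
proof (rule ccontr)
  assume "\<not> (\<forall>y\<in>B. i \<le> y)"
  then obtain z where z: "z \<in> B" "z < i" by (meson not_le)
  have f: "finite B" using blk_fin[OF P B(1)] .
  have "cp B i < i" using cp_lt[OF f B(2) z] by simp
  moreover have "i \<le> cp B j" using cp_lt[OF f B(3) B(2) ij] B(2) ij by simp
  ultimately show False using gt ap_blk[OF P B(1) B(2)] ap_blk[OF P B(1) B(3)] by simp
qed

lemma fwd_merge:
  assumes P: "nc_partition n Ps" and Bi: "Bi \<in> Ps" "i \<in> Bi" and Bj: "Bj \<in> Ps" "j \<in> Bj"
    and neq: "Bi \<noteq> Bj" and ij: "i < j"
    and T: "assoc_perm Ps \<circ> transpose i j \<in> NC n"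
    and gt: "assoc_perm Ps j < assoc_perm Ps i"
  shows "(\<forall>y\<in>Bi. i \<le> y) \<and> assoc_perm Ps j < i \<and>
         (\<forall>k\<in>{1..n}. assoc_perm Ps k < i \<and> i < k \<longrightarrow> j \<le> k)"
proof -
  define \<sigma> where "\<sigma> = assoc_perm Ps"
  define \<tau> where "\<tau> = assoc_perm Ps \<circ> transpose i j"
  obtain Qs where Qp: "nc_partition n Qs" and tq: "\<tau> = assoc_perm Qs"
    using T unfolding NC_def \<tau>_def by blast
  have ij': "i \<noteq> j" using ij by simp
  have tx: "\<tau> x = \<sigma> x" if "x \<noteq> i" "x \<noteq> j" for x using that unfolding \<tau>_def \<sigma>_def by simp
  have ti: "\<tau> i = \<sigma> j" and tj: "\<tau> j = \<sigma> i" using ij' unfolding \<tau>_def \<sigma>_def by simp_all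
  have fi: "finite Bi" using blk_fin[OF P Bi(1)] .
  have dij: "\<And>x. x \<in> Bi \<Longrightarrow> x \<notin> Bj" using blk_disj[OF P Bi(1) Bj(1) neq] .
  have jn: "j \<in> {1..n}" using blk_sub[OF P Bj(1)] Bj(2) by blast
  obtain Q where Q: "Q \<in> Qs" "j \<in> Q" using blk_ex[OF Qp jn] by blast
  have fQ: "finite Q" using blk_fin[OF Qp Q(1)] .
  have tQ: "\<tau> x = cp Q x" if "x \<in> Q" for x using ap_blk[OF Qp Q(1) that] tq by simp
  have siQ: "\<sigma> i \<in> Q" using tQ[OF Q(2)] cp_in[OF fQ Q(2)] tj by simp
  have siB: "\<sigma> i = cp Bi i" using ap_blk[OF P Bi] \<sigma>_def by simp
  have iQ: "i \<in> Q"
  proof (rule ccontr)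
    assume niQ: "i \<notin> Q"
    have "Bi \<subseteq> Q"
    proof (rule cp_closure[OF fi])
      show "cp Bi i \<in> Bi" using cp_in[OF fi Bi(2)] .
      show "cp Bi i \<in> Q" using siQ siB by simp
      show "\<forall>x\<in>Bi \<inter> Q. cp Bi x \<in> Q"
      proof
        fix x assume x: "x \<in> Bi \<inter> Q"
        then have "x \<noteq> i" "x \<noteq> j" using niQ dij Bj(2) by auto
        then have "cp Bi x = \<tau> x" using tx ap_blk[OF P Bi(1)] x \<sigma>_def by simp
        also have "\<dots> = cp Q x" using tQ x by simp
        finally show "cp Bi x \<in> Q" using cp_in[OF fQ] x by simp
      qed
    qed
    then show False using Bi(2) niQ by blast
  qed
  have "i \<le> cp Q j" using cp_lt[OF fQ Q(2) iQ ij] iQ ij by simp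
  then have isi: "i \<le> \<sigma> i" using tQ[OF Q(2)] tj by simp
  have im: "\<forall>y\<in>Bi. i \<le> y" using cp_cases[OF fi Bi(2)] isi siB by auto
  have sji: "\<sigma> j < i"
  proof (rule ccontr)
    assume "\<not> \<sigma> j < i"
    then have "i \<le> cp Q i" using tQ[OF iQ] ti by simp
    then have "\<forall>y\<in>Q. y \<le> cp Q i" using cp_cases[OF fQ iQ] by (meson leD)
    then have "\<sigma> i \<le> \<sigma> j" using siQ tQ[OF iQ] ti by simp
    then show False using gt \<sigma>_def by simp
  qed
  have mn: "\<forall>k\<in>{1..n}. \<sigma> k < i \<and> i < k \<longrightarrow> j \<le> k"
  proof (intro ballI impI)
    fix k assume k: "k \<in> {1..n}" and ks: "\<sigma> k < i \<and> i < k"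
    show "j \<le> k"
    proof (rule ccontr)
      assume "\<not> j \<le> k"
      then have kj: "k < j" by simp
      obtain Qk where Qk: "Qk \<in> Qs" "k \<in> Qk" using blk_ex[OF Qp k] by blast
      have fk: "finite Qk" using blk_fin[OF Qp Qk(1)] .
      have tk: "\<tau> k = cp Qk k" using ap_blk[OF Qp Qk] tq by simp
      have sk: "\<sigma> k = cp Qk k" using tk tx[of k] ks kj by simp
      have skQ: "\<sigma> k \<in> Qk" using sk cp_in[OF fk Qk(2)] by simp
      have l: "\<forall>z\<in>Qk. z < k \<longrightarrow> z \<le> \<sigma> k" using cp_cases[OF fk Qk(2)] sk ks by auto
      show False
      proof (cases "Qk = Q")
        case True
        then show False using l iQ ks by fastforce
      next
        case False
        show False using ncD[OF Qp Qk(1) Q(1) False skQ Qk(2) iQ Q(2)] ks kj by simp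
      qed
    qed
  qed
  show ?thesis using im sji mn \<sigma>_def by simp
qed

theorem proposition8p16:
  fixes n i j :: nat and \<sigma> :: "nat \<Rightarrow> nat"
  assumes "\<sigma> \<in> NC n" and "1 \<le> i" and "i < j" and "j \<le> n"
  shows "(i, j) \<in> Inv_NC n \<sigma> \<longleftrightarrow>
           (i = Min (orbit \<sigma> i) \<and>
            (j \<in> orbit \<sigma> i \<or>
             (\<sigma> j < i \<and> i < j \<and>
              (\<forall>k \<in> {1..n}. \<sigma> k < i \<and> i < k \<longrightarrow> j \<le> k))))"
proof -
  obtain Ps where P: "nc_partition n Ps" and sP: "\<sigma> = assoc_perm Ps"
    using assms(1) unfolding NC_def by blast
  have inr: "i \<in> {1..n}" "j \<in> {1..n}" using assms by auto
  obtain Bi where Bi: "Bi \<in> Ps" "i \<in> Bi" using blk_ex[OF P inr(1)] by blast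
  obtain Bj where Bj: "Bj \<in> Ps" "j \<in> Bj" using blk_ex[OF P inr(2)] by blast
  have fi: "finite Bi" using blk_fin[OF P Bi(1)] .
  have orb: "orbit \<sigma> i = Bi" using orbit_eq[OF P Bi] sP by simp
  have minI: "(i = Min Bi) \<longleftrightarrow> (\<forall>y\<in>Bi. i \<le> y)"
  proof
    assume "i = Min Bi" then show "\<forall>y\<in>Bi. i \<le> y" using fi by simp
  next
    assume "\<forall>y\<in>Bi. i \<le> y" then show "i = Min Bi" using fi Bi(2) by (intro Min_eqI[symmetric]) auto
  qed
  have jB: "(j \<in> Bi) \<longleftrightarrow> Bi = Bj"
    using blk_disj[OF P Bj(1) Bi(1) _ Bj(2)] Bj(2) by blast
  have inv: "(i, j) \<in> Inv_NC n \<sigma> \<longleftrightarrow> (\<sigma> \<circ> transpose i j \<in> NC n \<and> \<sigma> j < \<sigma> i)"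
    unfolding Inv_NC_def using inr assms(3) by auto
  show ?thesis
  proof
    assume L: "(i, j) \<in> Inv_NC n \<sigma>"
    then have T: "\<sigma> \<circ> transpose i j \<in> NC n" and gt: "\<sigma> j < \<sigma> i" using inv by auto
    show "i = Min (orbit \<sigma> i) \<and> (j \<in> orbit \<sigma> i \<or> (\<sigma> j < i \<and> i < j \<and>
              (\<forall>k \<in> {1..n}. \<sigma> k < i \<and> i < k \<longrightarrow> j \<le> k)))"
    proof (cases "Bi = Bj")
      case True
      then have "\<forall>y\<in>Bi. i \<le> y" using fwd_same[OF P Bi Bj(2)[folded True] assms(3)] gt sP by simp
      then show ?thesis using minI orb jB True by simp
    next
      case False
      have "(\<forall>y\<in>Bi. i \<le> y) \<and> assoc_perm Ps j < i \<and>
         (\<forall>k\<in>{1..n}. assoc_perm Ps k < i \<and> i < k \<longrightarrow> j \<le> k)"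
        using fwd_merge[OF P Bi Bj False assms(3)] T gt sP by simp
      then show ?thesis using minI orb assms(3) sP by simp
    qed
  next
    assume R: "i = Min (orbit \<sigma> i) \<and> (j \<in> orbit \<sigma> i \<or> (\<sigma> j < i \<and> i < j \<and>
              (\<forall>k \<in> {1..n}. \<sigma> k < i \<and> i < k \<longrightarrow> j \<le> k)))"
    then have im: "\<forall>y\<in>Bi. i \<le> y" using minI orb by simp
    have sib: "\<sigma> i = cp Bi i" using ap_blk[OF P Bi] sP by simp
    have vi: "cp Bi i \<in> Bi" using cp_in[OF fi Bi(2)] .
    have l: "\<forall>y\<in>Bi. y \<le> cp Bi i" using cp_cases[OF fi Bi(2)] vi im by (meson leD)
    show "(i, j) \<in> Inv_NC n \<sigma>"
    proof (cases "j \<in> Bi")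
      case True
      have T: "\<sigma> \<circ> transpose i j \<in> NC n" using split_NC[OF P Bi True im assms(3)] sP by simp
      have "\<sigma> j = cp Bi j" using ap_blk[OF P Bi(1) True] sP by simp
      moreover have "cp Bi j < j" using cp_lt[OF fi True Bi(2) assms(3)] by simp
      moreover have "j \<le> \<sigma> i" using l True sib by simp
      ultimately show ?thesis using inv T by simp
    next
      case False
      then have neq: "Bi \<noteq> Bj" using jB by simp
      have R2: "\<sigma> j < i" "\<forall>k \<in> {1..n}. \<sigma> k < i \<and> i < k \<longrightarrow> j \<le> k" using R False orb by auto
      have T: "\<sigma> \<circ> transpose i j \<in> NC n"
        using merge_NC[OF P Bi Bj neq im assms(3)] R2 sP by simp
      have "i \<le> \<sigma> i" using im vi sib by simp
      then show ?thesis using inv T R2 by simp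
    qed
  qed
qed

end
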